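(* Assume the standing setting described in the context. Let $(N_{1,n},V_{1,n})$ and $(N_{2,n},V_{2,n})$ be deterministic sequences of norms and polar angles, let $W_{1,n}:=V_{1,n}$, $W_{2,n}:=\pi-V_{2,n}$, and suppose $(N_{i,n},W_{i,n})\to\mathrm{Pole}_i$ for $i\in\{1,2\}$. Then, with $p(r,\varphi):=r(\cos\varphi,\sin\varphi)$ and $F_n:=W_{1,n}+W_{2,n}$, $$\big|p(N_{1,n},V_{1,n})-p(N_{2,n},V_{2,n})\big|=N_{1,n}+N_{2,n}-\frac a4F_n^2+\widetilde R_n,$$ where $\widetilde R_n=O(F_n^4)+A_n+B_n+C_n+D_n$ with $A_n=\frac14\big(\frac12F_n^2+O(F_n^4)\big)(a-N_{1,n})$, $B_n=\frac14\big(\frac12F_n^2+O(F_n^4)\big)(a-N_{2,n})$, $C_n=-\frac{a}{16}\big(\frac12F_n^2+O(F_n^4)\big)^2$, $D_n=O\Big((a-N_{1,n})^2+(a-N_{2,n})^2+\big(\frac12F_n^2+O(F_n^4)\big)^2\Big)$, as $n\to\infty$.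
   Context: Standing setting: $E\subset\mathbb{R}^2$ is compact, $a>0$, $\mathrm{diam}(E)=2a$, $\inf\{x:(x,y)\in E\}=-a$, $\sup\{x:(x,y)\in E\}=a$, and $E$ is the support of a Lebesgue density $f$ satisfying the paper's regularity assumptions near $(\pm a,0)$. $Q_1,\dots,Q_4$ are the open quadrants, $Q_1=\{x>0,y>0\}$, numbered anticlockwise, and $E_i:=E\cap Q_i$. Polar angles take values in $[0,2\pi)$. For $i\in\{1,2,3,4\}$, given sequences $N_{i,n}$ (norm) and $V_{i,n}$ (polar angle), set $W_{1,n}=V_{1,n}$, $W_{2,n}=\pi-V_{2,n}$, $W_{3,n}=V_{3,n}-\pi$, $W_{4,n}=2\pi-V_{4,n}$; one writes $(N_{i,n},W_{i,n})\to\mathrm{Pole}_i$ if $N_{i,n}\ge0$, $W_{i,n}\ge0$ for every $n$, the point $p(N_{i,n},V_{i,n})$ lies in $E_i$, and these points converge to $(a,0)$ if $i\in\{1,4\}$, resp. to $(-a,0)$ if $i\in\{2,3\}$. *)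

theory Defs
  imports "HOL-Analysis.Analysis" "HOL-Library.Landau_Symbols"
begin

text \<open>Points of the plane are pairs of reals; the norm on real \<times> real is Euclidean.\<close>

definition polar_pt :: "real \<Rightarrow> real \<Rightarrow> real \<times> real" where
  "polar_pt r \<phi> = (r * cos \<phi>, r * sin \<phi>)"

definition quadrant :: "nat \<Rightarrow> (real \<times> real) set" where
  "quadrant i =
     (if i = 1 then {(x, y). x > 0 \<and> y > 0}
      else if i = 2 then {(x, y). x < 0 \<and> y > 0}
      else if i = 3 then {(x, y). x < 0 \<and> y < 0}
      else if i = 4 then {(x, y). x > 0 \<and> y < 0}
      else {})"

definition W_angle :: "nat \<Rightarrow> real \<Rightarrow> real" where
  "W_angle i v =
     (if i = 1 then v
      else if i = 2 then pi - v
      else if i = 3 then v - pi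
      else 2 * pi - v)"

definition to_pole :: "(real \<times> real) set \<Rightarrow> real \<Rightarrow> nat \<Rightarrow> (nat \<Rightarrow> real) \<Rightarrow> (nat \<Rightarrow> real) \<Rightarrow> bool" where
  "to_pole E a i N V \<longleftrightarrow>
     (\<forall>n. N n \<ge> 0 \<and> W_angle i (V n) \<ge> 0 \<and> polar_pt (N n) (V n) \<in> E \<inter> quadrant i) \<and>
     (\<lambda>n. polar_pt (N n) (V n)) \<longlonglongrightarrow> (if i \<in> {1, 4} then (a, 0) else (-a, 0))"

definition density_support :: "(real \<times> real \<Rightarrow> real) \<Rightarrow> (real \<times> real) set" where
  "density_support f = {x. \<forall>e>0. (LINT y:ball x e|lborel. f y) > 0}"

definition is_density :: "(real \<times> real \<Rightarrow> real) \<Rightarrow> bool" where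
  "is_density f \<longleftrightarrow> (\<forall>x. f x \<ge> 0) \<and> integrable lborel f \<and> integral\<^sup>L lborel f = 1"

end

theory Submission
  imports Defs
begin

lemma core:
  fixes a n1 n2 x w d :: real
  assumes a: "a > 0" and b1: "a/2 \<le> n1" "n1 \<le> 3*a/2" and b2: "a/2 \<le> n2" "n2 \<le> 3*a/2"
    and sx: "w^2 \<le> x^2" and sx2: "x^2 - w^2 \<le> x^4/3" and d0: "d \<ge> 0"
    and dd: "d^2 = (n1+n2)^2 - 4*n1*n2*w^2"
  shows "\<bar>d - (n1+n2) + a*x^2\<bar> \<le> (42*a + 2) * ((a-n1)^2 + (a-n2)^2 + x^4)"
proof -
  define S where "S = n1 + n2"
  define P where "P = n1 * n2"
  define e1 where "e1 = a - n1"
  define e2 where "e2 = a - n2"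
  have S: "S \<ge> a" using b1 b2 by (simp add: S_def)
  have Spos: "S > 0" using S a by linarith
  have Sd: "S + d > 0" using Spos d0 by linarith
  have P0: "P \<ge> 0" using b1 b2 a unfolding P_def by (simp add: mult_nonneg_nonneg)
  have Pb: "P \<le> 9*a^2/4"
  proof -
    have "n1 * n2 \<le> (3*a/2)*(3*a/2)" using b1 b2 a by (intro mult_mono) auto
    thus ?thesis by (simp add: P_def power2_eq_square)
  qed
  have e1b: "\<bar>e1\<bar> \<le> a/2" using b1 unfolding e1_def abs_le_iff by auto
  have e2b: "\<bar>e2\<bar> \<le> a/2" using b2 unfolding e2_def abs_le_iff by auto
  have s2: "w^2 \<ge> 0" by simp
  have hd: "(S - d) * (S + d) = 4*P*w^2" using dd unfolding S_def P_def by (simp add: algebra_simps power2_eq_square)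
  have h1: "S - d = 4*P*w^2/(S+d)" using hd Sd by (simp add: field_simps)
  have R: "d - S + a*x^2 = a*(x^2 - w^2) + w^2*((a - 2*P/S) + (2*P/S - 4*P/(S+d)))"
    using h1 by (simp add: algebra_simps)
  have k1: "2*P/S - 4*P/(S+d) = - 2*P*(S-d)/(S*(S+d))"
    using Spos Sd by (simp add: field_simps)
  have k2: "2*P/S - 4*P/(S+d) = - 8*P^2*w^2/(S*(S+d)^2)"
    unfolding k1 h1 using Spos Sd by (simp add: field_simps power2_eq_square)
  have k3: "\<bar>2*P/S - 4*P/(S+d)\<bar> \<le> 41*a*w^2"
  proof -
    have "\<bar>2*P/S - 4*P/(S+d)\<bar> = 8*P^2*w^2/(S*(S+d)^2)"
      unfolding k2 using Spos Sd P0 by simp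
    also have "\<dots> \<le> 8*P^2*w^2/(a*a^2)"
    proof (rule divide_left_mono)
      have "a*a^2 \<le> S*(S+d)^2" using S a d0
        by (intro mult_mono power_mono) auto
      thus "a*a^2 \<le> S*(S+d)^2" .
    qed (use a P0 Spos Sd in auto)
    also have "\<dots> \<le> 8*(9*a^2/4)^2*w^2/(a*a^2)"
    proof -
      have "P^2 \<le> (9*a^2/4)^2" using P0 Pb by (intro power_mono)
      hence "8*P^2*w^2 \<le> 8*(9*a^2/4)^2*w^2" by (intro mult_right_mono) auto
      thus ?thesis using a by (intro divide_right_mono) auto
    qed
    also have "\<dots> = 81/2 * a * w^2" using a by (simp add: field_simps power2_eq_square)
    also have "\<dots> \<le> 41*a*w^2" using a by (intro mult_right_mono) auto
    finally show ?thesis .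
  qed
  have k4: "a*S - 2*P = a*e1 + a*e2 - 2*e1*e2"
    unfolding S_def P_def e1_def e2_def by (simp add: algebra_simps)
  have k5: "\<bar>a*S - 2*P\<bar> \<le> a*\<bar>e1\<bar> + 2*a*\<bar>e2\<bar>"
  proof -
    have "\<bar>2*e1*e2\<bar> \<le> a*\<bar>e2\<bar>"
    proof -
      have "\<bar>2*e1*e2\<bar> = (2*\<bar>e1\<bar>)*\<bar>e2\<bar>" by (simp add: abs_mult)
      also have "\<dots> \<le> a*\<bar>e2\<bar>" using e1b by (intro mult_right_mono) auto
      finally show ?thesis .
    qed
    moreover have "\<bar>a*e1\<bar> = a*\<bar>e1\<bar>" "\<bar>a*e2\<bar> = a*\<bar>e2\<bar>" using a by (simp_all add: abs_mult)
    moreover have "\<bar>a*e1 + a*e2 - 2*e1*e2\<bar> \<le> \<bar>a*e1\<bar> + \<bar>a*e2\<bar> + \<bar>2*e1*e2\<bar>" by linarith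
    ultimately show ?thesis unfolding k4 by linarith
  qed
  have k6: "\<bar>a - 2*P/S\<bar> \<le> \<bar>e1\<bar> + 2*\<bar>e2\<bar>"
  proof -
    have "a - 2*P/S = (a*S - 2*P)/S" using Spos by (simp add: field_simps)
    hence "\<bar>a - 2*P/S\<bar> = \<bar>a*S - 2*P\<bar>/S" using Spos by simp
    also have "\<dots> \<le> (a*\<bar>e1\<bar> + 2*a*\<bar>e2\<bar>)/a"
      using k5 Spos S a by (meson abs_ge_zero divide_mono order.trans)
    also have "\<dots> = \<bar>e1\<bar> + 2*\<bar>e2\<bar>" using a by (simp add: field_simps)
    finally show ?thesis .
  qed
  define u where "u = a - 2*P/S"
  define v where "v = 2*P/S - 4*P/(S+d)"
  have t1: "\<bar>a*(x^2 - w^2) + w^2*(u + v)\<bar> \<le> \<bar>a*(x^2 - w^2)\<bar> + \<bar>w^2*(u + v)\<bar>"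
    by (rule abs_triangle_ineq)
  have t2: "\<bar>a*(x^2 - w^2)\<bar> \<le> a*(x^4/3)"
  proof -
    have "\<bar>a*(x^2 - w^2)\<bar> = a*(x^2-w^2)" using a sx by (simp add: abs_mult)
    also have "\<dots> \<le> a*(x^4/3)" using a sx2 by (intro mult_left_mono) auto
    finally show ?thesis .
  qed
  have t3: "\<bar>w^2*(u + v)\<bar> \<le> x^2*((\<bar>e1\<bar> + 2*\<bar>e2\<bar>) + 41*a*x^2)"
  proof -
    have "\<bar>w^2*(u + v)\<bar> = w^2*\<bar>u+v\<bar>" by (simp add: abs_mult)
    also have "\<dots> \<le> w^2*(\<bar>u\<bar> + \<bar>v\<bar>)" by (intro mult_left_mono) auto
    also have "\<dots> \<le> w^2*((\<bar>e1\<bar> + 2*\<bar>e2\<bar>) + 41*a*w^2)"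
      using k3 k6 unfolding u_def v_def by (intro mult_left_mono add_mono) auto
    also have "\<dots> \<le> w^2*((\<bar>e1\<bar> + 2*\<bar>e2\<bar>) + 41*a*x^2)"
      using sx a by (intro mult_left_mono add_mono) auto
    also have "\<dots> \<le> x^2*((\<bar>e1\<bar> + 2*\<bar>e2\<bar>) + 41*a*x^2)"
      using sx a by (intro mult_right_mono) auto
    finally show ?thesis .
  qed
  have "\<bar>d - S + a*x^2\<bar> \<le> a*(x^4/3) + x^2*((\<bar>e1\<bar> + 2*\<bar>e2\<bar>) + 41*a*x^2)"
    using t1 t2 t3 unfolding R u_def[symmetric] v_def[symmetric] by linarith
  also have "\<dots> = a*(x^4/3) + x^2*\<bar>e1\<bar> + 2*(x^2*\<bar>e2\<bar>) + 41*a*x^4"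
    by (simp add: algebra_simps power2_eq_square power4_eq_xxxx)
  also have "\<dots> \<le> a*(x^4/3) + (x^4 + e1^2)/2 + 2*((x^4+e2^2)/2) + 41*a*x^4"
  proof -
    have g: "y*\<bar>e\<bar> \<le> (y^2 + e^2)/2" for y e :: real
    proof -
      have "0 \<le> (y - \<bar>e\<bar>)^2" by simp
      thus ?thesis by (simp add: power2_diff)
    qed
    have "x^4 = (x^2)^2" by simp
    thus ?thesis using g[of "x^2" e1] g[of "x^2" e2] by (simp add: field_simps)
  qed
  also have "\<dots> = (41*a + a/3 + 3/2)*x^4 + e1^2/2 + e2^2"
    by (simp add: field_simps)
  also have "\<dots> \<le> (42*a + 2) * (e1^2 + e2^2 + x^4)"
  proof -
    have "(41*a + a/3 + 3/2)*x^4 \<le> (42*a+2)*x^4" using a by (intro mult_right_mono) auto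
    moreover have "e1^2/2 \<le> (42*a+2)*e1^2" using a by (simp add: algebra_simps)
    moreover have "e2^2 \<le> (42*a+2)*e2^2" using a by (simp add: algebra_simps)
    ultimately show ?thesis by (simp add: algebra_simps)
  qed
  finally show ?thesis unfolding S_def e1_def e2_def .
qed

lemma sin_sq_bounds:
  fixes x :: real
  shows "(sin x)^2 \<le> x^2" and "x^2 - (sin x)^2 \<le> x^4/3"
proof -
  have ab: "\<bar>sin x\<bar> \<le> \<bar>x\<bar>" by (rule abs_sin_x_le_abs_x)
  thus "(sin x)^2 \<le> x^2" by (metis abs_ge_zero power2_abs power_mono)
  have m: "\<bar>sin x - x\<bar> \<le> inverse 6 * \<bar>x\<bar>^3"
    using Maclaurin_sin_bound[of x 3] by (simp add: sin_coeff_def eval_nat_numeral)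
  have "\<bar>x\<bar> - \<bar>sin x\<bar> \<le> \<bar>x\<bar>^3/6" 
  proof -
    have "\<bar>x\<bar> - \<bar>sin x\<bar> \<le> \<bar>x - sin x\<bar>" by (rule abs_triangle_ineq2)
    also have "\<dots> = \<bar>sin x - x\<bar>" by (rule abs_minus_commute)
    finally show ?thesis using m by (simp add: field_simps)
  qed
  moreover have "0 \<le> \<bar>x\<bar> - \<bar>sin x\<bar>" using ab by simp
  ultimately have "(\<bar>x\<bar> - \<bar>sin x\<bar>)*(\<bar>x\<bar> + \<bar>sin x\<bar>) \<le> (\<bar>x\<bar>^3/6)*(2*\<bar>x\<bar>)"
    using ab by (intro mult_mono) auto
  moreover have "(\<bar>x\<bar> - \<bar>sin x\<bar>)*(\<bar>x\<bar> + \<bar>sin x\<bar>) = x^2 - (sin x)^2"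
    by (simp add: algebra_simps power2_eq_square)
  moreover have "(\<bar>x\<bar>^3/6)*(2*\<bar>x\<bar>) = x^4/3"
  proof -
    have "(\<bar>x\<bar>^3/6)*(2*\<bar>x\<bar>) = \<bar>x\<bar>^4/3" by (simp add: eval_nat_numeral)
    also have "\<bar>x\<bar>^4 = x^4" by (simp add: power_abs[symmetric] eval_nat_numeral)
    finally show ?thesis .
  qed
  ultimately show "x^2 - (sin x)^2 \<le> x^4/3" by simp
qed

lemma dist_polar:
  fixes n1 n2 v1 v2 :: real
  shows "(dist (n1*cos v1, n1* sin v1) (n2*cos v2, n2* sin v2))^2 =
         (n1+n2)^2 - 4*n1*n2*(sin ((v1 + (pi - v2))/2))^2"
proof -
  define F where "F = v1 + (pi - v2)"
  have c: "cos (v1 - v2) = - cos F" unfolding F_def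
  proof -
    have "v1 - v2 = v1 + (pi - v2) - pi" by simp
    thus "cos (v1 - v2) = - cos (v1 + (pi - v2))" by (simp only: cos_diff) simp
  qed
  have cF: "cos F = 1 - 2*(sin (F/2))^2" using cos_double_sin[of "F/2"] by simp
  have "(dist (n1*cos v1, n1* sin v1) (n2*cos v2, n2* sin v2))^2
      = (n1*cos v1 - n2*cos v2)^2 + (n1* sin v1 - n2* sin v2)^2"
    by (simp add: dist_Pair_Pair dist_real_def)
  also have "\<dots> = n1^2*((cos v1)^2 + (sin v1)^2) + n2^2*((cos v2)^2 + (sin v2)^2)
       - 2*n1*n2*(cos v1 * cos v2 + sin v1 * sin v2)"
    by (unfold power2_eq_square) algebra
  also have "\<dots> = n1^2 + n2^2 - 2*n1*n2*cos (v1 - v2)"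
  proof -
    have "n1^2*((cos v1)^2 + (sin v1)^2) + n2^2*((cos v2)^2 + (sin v2)^2)
       - 2*n1*n2*(cos v1 * cos v2 + sin v1 * sin v2) = n1^2*1 + n2^2*1 - 2*n1*n2*cos (v1 - v2)"
      by (simp only: cos_diff sin_cos_squared_add2)
    thus ?thesis by simp
  qed
  also have "\<dots> = (n1+n2)^2 - 4*n1*n2*(sin (F/2))^2" unfolding c cF
    by (simp add: algebra_simps power2_eq_square)
  finally show ?thesis unfolding F_def .
qed

lemma dbound:
  fixes a n1 n2 d F :: real
  assumes a: "a > 0"
    and c: "\<bar>d - (n1+n2) + a*(F/2)^2\<bar> \<le> (42*a + 2) * ((a-n1)^2 + (a-n2)^2 + (F/2)^4)"
  shows "\<bar>d - (n1 + n2 - a / 4 * F ^ 2 + (0 + 1/4 * (F ^ 2 / 2 + 0) * (a - n1)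
               + 1/4 * (F ^ 2 / 2 + 0) * (a - n2) - a / 16 * (F ^ 2 / 2 + 0)\<^sup>2))\<bar>
         \<le> (43*a + 3) * \<bar>(a - n1)\<^sup>2 + (a - n2)\<^sup>2 + (F ^ 2 / 2 + 0)\<^sup>2\<bar>"
proof -
  define x where "x = F/2"
  define e1 where "e1 = a - n1"
  define e2 where "e2 = a - n2"
  define H where "H = e1^2 + e2^2 + x^4"
  have F: "F = 2*x" unfolding x_def by simp
  have H0: "H \<ge> 0" unfolding H_def by simp
  have G: "(a - n1)\<^sup>2 + (a - n2)\<^sup>2 + (F ^ 2 / 2 + 0)\<^sup>2 = e1^2 + e2^2 + 4*x^4"
    unfolding F e1_def e2_def by (simp add: power_mult_distrib eval_nat_numeral)
  have GH: "H \<le> e1^2 + e2^2 + 4*x^4" unfolding H_def by simp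
  have eq: "d - (n1 + n2 - a / 4 * F ^ 2 + (0 + 1/4 * (F ^ 2 / 2 + 0) * (a - n1)
               + 1/4 * (F ^ 2 / 2 + 0) * (a - n2) - a / 16 * (F ^ 2 / 2 + 0)\<^sup>2))
      = (d - (n1+n2) + a*x^2) - (x^2*e1)/2 - (x^2*e2)/2 + a*x^4/4"
    unfolding F e1_def e2_def by (simp add: power_mult_distrib eval_nat_numeral algebra_simps)
  have g: "\<bar>y*e\<bar> \<le> (y^2 + e^2)/2" for y e :: real
  proof -
    have "0 \<le> (\<bar>y\<bar> - \<bar>e\<bar>)^2" by simp
    thus ?thesis by (simp add: power2_diff abs_mult)
  qed
  have x4: "(x^2)^2 = x^4" by simp
  have g': "\<bar>x^2*e\<bar> \<le> (x^4 + e^2)/2" for e using g[of "x^2" e] unfolding x4 .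
  have b1: "\<bar>x^2*e1\<bar> \<le> H/2" by (rule order_trans[OF g'[of e1]]) (auto simp: H_def intro!: divide_right_mono)
  have b2: "\<bar>x^2*e2\<bar> \<le> H/2" by (rule order_trans[OF g'[of e2]]) (auto simp: H_def intro!: divide_right_mono)
  have b3: "a*x^4/4 \<le> a*H/4" using a unfolding H_def by (simp add: mult_left_mono)
  have c': "\<bar>d - (n1+n2) + a*x^2\<bar> \<le> (42*a + 2) * H"
    using c unfolding x_def[symmetric] e1_def[symmetric] e2_def[symmetric] H_def .
  have x40: "x^4 \<ge> 0" by (metis x4 zero_le_power2)
  have "\<bar>(d - (n1+n2) + a*x^2) - (x^2*e1)/2 - (x^2*e2)/2 + a*x^4/4\<bar>
     \<le> (42*a + 2) * H + H/4 + H/4 + a*H/4"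
  proof -
    have tri: "\<bar>A - B/2 - C/2 + E\<bar> \<le> \<bar>A\<bar> + \<bar>B\<bar>/2 + \<bar>C\<bar>/2 + \<bar>E\<bar>" for A B C E :: real
      by arith
    have "\<bar>a*x^4/4\<bar> = a*x^4/4" using a x40 by simp
    thus ?thesis using tri[of "d - (n1+n2) + a*x^2" "x^2*e1" "x^2*e2" "a*x^4/4"] b1 b2 b3 c' by linarith
  qed
  also have "\<dots> = (169/4*a + 5/2) * H" by (simp add: algebra_simps)
  also have "\<dots> \<le> (43*a+3) * H" using a H0 by (intro mult_right_mono) auto
  also have "\<dots> \<le> (43*a+3) * (e1^2 + e2^2 + 4*x^4)" using GH a by (intro mult_left_mono) auto
  finally show ?thesis unfolding eq G by (smt (verit) H0 GH)
qed

theorem lemma4: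
  fixes E :: "(real \<times> real) set" and a :: real and f :: "real \<times> real \<Rightarrow> real"
    and N1 V1 N2 V2 :: "nat \<Rightarrow> real"
  assumes "compact E" and "a > 0" and "diameter E = 2 * a"
    and "Inf (fst ` E) = - a" and "Sup (fst ` E) = a"
    and "is_density f" and "E = density_support f"
    and "\<And>n. V1 n \<in> {0..<2 * pi}" and "\<And>n. V2 n \<in> {0..<2 * pi}"
    and "to_pole E a 1 N1 V1" and "to_pole E a 2 N2 V2"
  shows "\<exists>r0 r1 r2 r3 r4 D :: nat \<Rightarrow> real.
     (let F = (\<lambda>n. W_angle 1 (V1 n) + W_angle 2 (V2 n)) in
       r0 \<in> O(\<lambda>n. F n ^ 4) \<and> r1 \<in> O(\<lambda>n. F n ^ 4) \<and> r2 \<in> O(\<lambda>n. F n ^ 4) \<and>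
       r3 \<in> O(\<lambda>n. F n ^ 4) \<and> r4 \<in> O(\<lambda>n. F n ^ 4) \<and>
       D \<in> O(\<lambda>n. (a - N1 n)\<^sup>2 + (a - N2 n)\<^sup>2 + (F n ^ 2 / 2 + r4 n)\<^sup>2) \<and>
       (\<forall>n. dist (polar_pt (N1 n) (V1 n)) (polar_pt (N2 n) (V2 n)) =
            N1 n + N2 n - a / 4 * F n ^ 2
            + (r0 n
               + 1/4 * (F n ^ 2 / 2 + r1 n) * (a - N1 n)
               + 1/4 * (F n ^ 2 / 2 + r2 n) * (a - N2 n)
               - a / 16 * (F n ^ 2 / 2 + r3 n)\<^sup>2
               + D n)))"
  proof -
  have a0: "a > 0" using assms(2) .
  have t1: "\<forall>n. N1 n \<ge> 0 \<and> W_angle 1 (V1 n) \<ge> 0 \<and> polar_pt (N1 n) (V1 n) \<in> E \<inter> quadrant 1"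
    and l1: "(\<lambda>n. polar_pt (N1 n) (V1 n)) \<longlonglongrightarrow> (a, 0)"
    using assms(10) unfolding to_pole_def by auto
  have t2: "\<forall>n. N2 n \<ge> 0 \<and> W_angle 2 (V2 n) \<ge> 0 \<and> polar_pt (N2 n) (V2 n) \<in> E \<inter> quadrant 2"
    and l2: "(\<lambda>n. polar_pt (N2 n) (V2 n)) \<longlonglongrightarrow> (-a, 0)"
    using assms(11) unfolding to_pole_def by auto
  have np: "norm (polar_pt r \<phi>) = r" if "r \<ge> 0" for r \<phi>
  proof -
    have "(r * cos \<phi>)^2 + (r * sin \<phi>)^2 = r^2 * ((cos \<phi>)^2 + (sin \<phi>)^2)"
      by (simp only: power_mult_distrib distrib_left)
    also have "\<dots> = r^2 * 1" by (simp only: sin_cos_squared_add2 sin_cos_squared_add)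
    also have "\<dots> = r^2" by simp
    finally show ?thesis using that by (simp add: polar_pt_def norm_Pair)
  qed
  have N1lim: "N1 \<longlonglongrightarrow> a"
  proof -
    have "(\<lambda>n. norm (polar_pt (N1 n) (V1 n))) \<longlonglongrightarrow> norm (a, 0::real)" using l1 by (rule tendsto_norm)
    moreover have "(\<lambda>n. norm (polar_pt (N1 n) (V1 n))) = N1" using t1 np by auto
    moreover have "norm (a, 0::real) = a" using a0 by (simp add: norm_Pair)
    ultimately show ?thesis by simp
  qed
  have N2lim: "N2 \<longlonglongrightarrow> a"
  proof -
    have "(\<lambda>n. norm (polar_pt (N2 n) (V2 n))) \<longlonglongrightarrow> norm (-a, 0::real)" using l2 by (rule tendsto_norm)
    moreover have "(\<lambda>n. norm (polar_pt (N2 n) (V2 n))) = N2" using t2 np by auto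
    moreover have "norm (-a, 0::real) = a" using a0 by (simp add: norm_Pair)
    ultimately show ?thesis by simp
  qed
  have ev1: "eventually (\<lambda>n. dist (N1 n) a < a/2) sequentially"
    using tendstoD[OF N1lim, of "a/2"] a0 by simp
  have ev2: "eventually (\<lambda>n. dist (N2 n) a < a/2) sequentially"
    using tendstoD[OF N2lim, of "a/2"] a0 by simp
  define F where "F n = W_angle 1 (V1 n) + W_angle 2 (V2 n)" for n
  define D where "D n = dist (polar_pt (N1 n) (V1 n)) (polar_pt (N2 n) (V2 n)) -
     (N1 n + N2 n - a / 4 * F n ^ 2 + (0 + 1/4 * (F n ^ 2 / 2 + 0) * (a - N1 n)
               + 1/4 * (F n ^ 2 / 2 + 0) * (a - N2 n) - a / 16 * (F n ^ 2 / 2 + 0)\<^sup>2))" for n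
  have Fv: "F n = V1 n + (pi - V2 n)" for n by (simp add: F_def W_angle_def)
  have z: "(\<lambda>n. 0::real) \<in> O(\<lambda>n. F n ^ 4)" by (rule bigoI[where c=0]) simp
  have DO: "D \<in> O(\<lambda>n. (a - N1 n)\<^sup>2 + (a - N2 n)\<^sup>2 + (F n ^ 2 / 2 + 0)\<^sup>2)"
  proof (rule bigoI[where c = "43*a+3"])
    show "eventually (\<lambda>n. norm (D n) \<le> (43*a+3) * norm ((a - N1 n)\<^sup>2 + (a - N2 n)\<^sup>2 + (F n ^ 2 / 2 + 0)\<^sup>2)) sequentially"
      using ev1 ev2
    proof eventually_elim
      case (elim n)
      have b1: "a/2 \<le> N1 n" "N1 n \<le> 3*a/2" using elim(1) by (auto simp: dist_real_def abs_real_def split: if_splits)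
      have b2: "a/2 \<le> N2 n" "N2 n \<le> 3*a/2" using elim(2) by (auto simp: dist_real_def abs_real_def split: if_splits)
      define d where "d = dist (polar_pt (N1 n) (V1 n)) (polar_pt (N2 n) (V2 n))"
      have dd: "d^2 = (N1 n + N2 n)^2 - 4*N1 n*N2 n*(sin (F n/2))^2"
        unfolding d_def polar_pt_def Fv by (rule dist_polar)
      have c: "\<bar>d - (N1 n + N2 n) + a*(F n/2)^2\<bar> \<le> (42*a + 2) * ((a-N1 n)^2 + (a-N2 n)^2 + (F n/2)^4)"
        by (rule core[OF a0 b1 b2 sin_sq_bounds(1) sin_sq_bounds(2) _ dd]) (simp add: d_def)
      show ?case using dbound[OF a0 c] unfolding D_def d_def by simp
    qed
  qed
  have eqn: "\<forall>n. dist (polar_pt (N1 n) (V1 n)) (polar_pt (N2 n) (V2 n)) =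
            N1 n + N2 n - a / 4 * F n ^ 2
            + (0
               + 1/4 * (F n ^ 2 / 2 + 0) * (a - N1 n)
               + 1/4 * (F n ^ 2 / 2 + 0) * (a - N2 n)
               - a / 16 * (F n ^ 2 / 2 + 0)\<^sup>2
               + D n)"
    unfolding D_def by simp
  show ?thesis unfolding Let_def F_def[symmetric]
    apply (rule exI[of _ "\<lambda>n. 0"])
    apply (rule exI[of _ "\<lambda>n. 0"])
    apply (rule exI[of _ "\<lambda>n. 0"])
    apply (rule exI[of _ "\<lambda>n. 0"])
    apply (rule exI[of _ "\<lambda>n. 0"])
    apply (rule exI[of _ D])
    using z DO eqn by simp
qed

end
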